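(* Let $X_1,\ldots,X_n$ be $\{0,1\}$-valued random variables satisfying negative regression and let $f:\{0,1\}^n\to\mathbb{R}$ be $1$-Lipschitz. Then there exists a random permutation $\pi(1),\ldots,\pi(n)$ of $[n]$ such that: (i) $\pi(1)$ is deterministic; (ii) for each $1\le k<n$, $\pi(k+1)$ is a deterministic function of the set $\pi([k])=\{\pi(1),\ldots,\pi(k)\}$ and the values $X_{\pi([k])}$; (iii) setting $Y_k=\mathbb{E}[f(X)\mid \pi([k]), X_{\pi([k])}]$ for $0\le k\le n$ (with $Y_0=\mathbb{E}[f(X)]$), the sequence $Y_0,Y_1,\ldots,Y_n$ is a martingale; (iv) for each $k<n$ and each $K\subseteq[n]$, $a_K\in\{0,1\}^K$ with $\Pr[\pi([k])=K, X_K=a_K]>0$, there exist $\alpha<\beta$ with $\beta-\alpha\le 2$ such that, conditioned on $\pi([k])=K, X_K=a_K$, $Y_{k+1}-Y_k\in[\alpha,\beta]$ almost surely; (v) if $f$ is moreover monotone (non-decreasing in each coordinate), then in (iv) one can take $\beta-\alpha\le 1$.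
   Context: For $S\subseteq[n]$, $X_S\in\{0,1\}^S$ denotes the tuple $(X_i)_{i\in S}$; $X=(X_1,\ldots,X_n)$. The variables $X_1,\ldots,X_n$ satisfy negative regression if for all disjoint $I,J\subseteq[n]$, every non-decreasing function $g:\{0,1\}^I\to\mathbb{R}$, and all $a\le b$ in $\{0,1\}^J$ (coordinatewise) such that $\Pr[X_J=a]>0$ and $\Pr[X_J=b]>0$, we have $\mathbb{E}[g(X_I)\mid X_J=a]\ge \mathbb{E}[g(X_I)\mid X_J=b]$. A function $f:\{0,1\}^n\to\mathbb{R}$ is $1$-Lipschitz if changing any single coordinate of its argument changes its value by at most $1$ in absolute value. The conditional expectation $Y_k$ is with respect to the information consisting of the set $\pi([k])$ together with the values of the variables indexed by it. *)

theory Defs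
  imports "HOL-Probability.Probability"
begin

text \<open>The vector \<open>(X_1,...,X_n)\<close> is represented by its joint law, a pmf \<open>P\<close> on
  assignments \<open>x :: nat \<Rightarrow> bool\<close>; coordinates are indexed by \<open>{..<n}\<close> and
  assignments are False outside \<open>{..<n}\<close> (the "cube").\<close>

definition cube :: "nat \<Rightarrow> (nat \<Rightarrow> bool) set" where
  "cube n = {x. \<forall>i. n \<le> i \<longrightarrow> \<not> x i}"

definition cexp :: "(nat \<Rightarrow> bool) pmf \<Rightarrow> (nat \<Rightarrow> bool) set \<Rightarrow> ((nat \<Rightarrow> bool) \<Rightarrow> real) \<Rightarrow> real" where
  "cexp P A g = measure_pmf.expectation P (\<lambda>x. indicator A x * g x) / measure_pmf.prob P A"

definition negative_regression :: "nat \<Rightarrow> (nat \<Rightarrow> bool) pmf \<Rightarrow> bool" where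
  "negative_regression n P \<longleftrightarrow>
     (\<forall>I J. I \<subseteq> {..<n} \<longrightarrow> J \<subseteq> {..<n} \<longrightarrow> I \<inter> J = {} \<longrightarrow>
       (\<forall>g :: (nat \<Rightarrow> bool) \<Rightarrow> real.
          (\<forall>x y. (\<forall>i\<in>I. x i \<le> y i) \<longrightarrow> g x \<le> g y) \<longrightarrow>
          (\<forall>a b :: nat \<Rightarrow> bool. (\<forall>j\<in>J. a j \<le> b j) \<longrightarrow>
             measure_pmf.prob P {x. \<forall>j\<in>J. x j = a j} > 0 \<longrightarrow>
             measure_pmf.prob P {x. \<forall>j\<in>J. x j = b j} > 0 \<longrightarrow>
             cexp P {x. \<forall>j\<in>J. x j = a j} g \<ge> cexp P {x. \<forall>j\<in>J. x j = b j} g)))"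

definition lipschitz1 :: "nat \<Rightarrow> ((nat \<Rightarrow> bool) \<Rightarrow> real) \<Rightarrow> bool" where
  "lipschitz1 n f \<longleftrightarrow> (\<forall>x\<in>cube n. \<forall>i<n. \<bar>f x - f (x(i := \<not> x i))\<bar> \<le> 1)"

definition monotone_cube :: "nat \<Rightarrow> ((nat \<Rightarrow> bool) \<Rightarrow> real) \<Rightarrow> bool" where
  "monotone_cube n f \<longleftrightarrow> (\<forall>x\<in>cube n. \<forall>y\<in>cube n. (\<forall>i<n. x i \<le> y i) \<longrightarrow> f x \<le> f y)"

text \<open>The random permutation is \<open>\<pi> x :: nat \<Rightarrow> nat\<close> (positions \<open>0..<n\<close>, so
  \<open>\<pi>([k])\<close> is \<open>\<pi> x ` {..<k}\<close>). The information after \<open>k\<close> steps at outcome \<open>x\<close>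
  is the event that the revealed set and the revealed values agree with those at \<open>x\<close>.\<close>
definition hist :: "((nat \<Rightarrow> bool) \<Rightarrow> nat \<Rightarrow> nat) \<Rightarrow> nat \<Rightarrow> (nat \<Rightarrow> bool) \<Rightarrow> (nat \<Rightarrow> bool) set" where
  "hist \<pi> k x = {y. \<pi> y ` {..<k} = \<pi> x ` {..<k} \<and> (\<forall>i\<in>\<pi> x ` {..<k}. y i = x i)}"

definition Ymart :: "(nat \<Rightarrow> bool) pmf \<Rightarrow> ((nat \<Rightarrow> bool) \<Rightarrow> real) \<Rightarrow> ((nat \<Rightarrow> bool) \<Rightarrow> nat \<Rightarrow> nat)
    \<Rightarrow> nat \<Rightarrow> (nat \<Rightarrow> bool) \<Rightarrow> real" where
  "Ymart P f \<pi> k x = cexp P (hist \<pi> k x) f"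

end

theory Submission imports Defs begin

definition Ew :: "(nat \<Rightarrow> bool) pmf \<Rightarrow> (nat \<Rightarrow> bool) set \<Rightarrow> ((nat \<Rightarrow> bool) \<Rightarrow> real) \<Rightarrow> real" where
  "Ew P A g = (\<Sum>x\<in>set_pmf P \<inter> A. pmf P x * g x)"

lemma finite_cube: "finite (cube n)"
proof -
  have "cube n \<subseteq> (\<lambda>B i. i \<in> B) ` Pow {..<n}"
  proof
    fix x assume "x \<in> cube n"
    then have "{i. x i} \<in> Pow {..<n}" by (auto simp: cube_def not_less[symmetric])
    moreover have "x = (\<lambda>i. i \<in> {i. x i})" by auto
    ultimately show "x \<in> (\<lambda>B i. i \<in> B) ` Pow {..<n}" by blast
  qed
  then show ?thesis by (rule finite_subset) auto
qed

lemma prob_Ew: "finite (set_pmf P) \<Longrightarrow> measure_pmf.prob P A = Ew P A (\<lambda>_. 1)"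
  unfolding Ew_def
  by (subst measure_Int_set_pmf[symmetric]) (simp add: measure_measure_pmf_finite Int_commute)

lemma cexp_Ew: assumes "finite (set_pmf P)" shows "cexp P A g = Ew P A g / Ew P A (\<lambda>_. 1)"
proof -
  have "measure_pmf.expectation P (\<lambda>x. indicator A x * g x) = (\<Sum>x\<in>set_pmf P. pmf P x *\<^sub>R (indicator A x * g x))"
    by (rule integral_measure_pmf[OF assms]) auto
  also have "\<dots> = Ew P A g" unfolding Ew_def
    by (simp add: sum.inter_restrict[OF assms]; rule sum.cong; auto)
  finally show ?thesis unfolding cexp_def using prob_Ew[OF assms] by simp
qed

lemma Ew_cong: "(\<And>x. x \<in> set_pmf P \<Longrightarrow> x \<in> A \<Longrightarrow> g x = h x) \<Longrightarrow> Ew P A g = Ew P A h"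
  unfolding Ew_def by (rule sum.cong) auto

lemma Ew_mono: "(\<And>x. x \<in> set_pmf P \<Longrightarrow> x \<in> A \<Longrightarrow> g x \<le> h x) \<Longrightarrow> Ew P A g \<le> Ew P A h"
  unfolding Ew_def by (rule sum_mono) (auto intro: mult_left_mono)

lemma Ew_add: "Ew P A (\<lambda>x. g x + h x) = Ew P A g + Ew P A h"
  unfolding Ew_def by (simp add: distrib_left sum.distrib)

lemma Ew_diff: "Ew P A (\<lambda>x. g x - h x) = Ew P A g - Ew P A h"
  unfolding Ew_def by (simp add: right_diff_distrib sum_subtractf)

lemma Ew_cmult: "Ew P A (\<lambda>x. c * g x) = c * Ew P A g"
  unfolding Ew_def by (simp add: sum_distrib_left algebra_simps)

lemma Ew_nonneg: "Ew P A (\<lambda>_. 1) \<ge> 0"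
  unfolding Ew_def by (simp add: sum_nonneg)

lemma Ew_pos: "finite (set_pmf P) \<Longrightarrow> x \<in> set_pmf P \<Longrightarrow> x \<in> A \<Longrightarrow> Ew P A (\<lambda>_. 1) > 0"
  unfolding Ew_def
  by (rule sum_pos2[of _ x]) (auto simp: pmf_positive pmf_nonneg)

lemma Ew_zero: "finite (set_pmf P) \<Longrightarrow> Ew P A (\<lambda>_. 1) = 0 \<Longrightarrow> Ew P A g = 0"
proof -
  assume f: "finite (set_pmf P)" and z: "Ew P A (\<lambda>_. 1) = 0"
  have "set_pmf P \<inter> A = {}" using Ew_pos[OF f] z by force
  then show ?thesis unfolding Ew_def by simp
qed

lemma Ew_split: assumes f: "finite (set_pmf P)" shows "Ew P A g = Ew P (A \<inter> B) g + Ew P (A - B) g"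
proof -
  have e: "set_pmf P \<inter> A = (set_pmf P \<inter> (A \<inter> B)) \<union> (set_pmf P \<inter> (A - B))" by blast
  show ?thesis unfolding Ew_def e
    by (rule sum.union_disjoint) (use f in auto)
qed

lemma cexp_bounds:
  assumes "finite (set_pmf P)" "Ew P A (\<lambda>_. 1) > 0"
    and "\<And>x. x \<in> set_pmf P \<Longrightarrow> x \<in> A \<Longrightarrow> lo \<le> g x \<and> g x \<le> hi"
  shows "lo \<le> Ew P A g / Ew P A (\<lambda>_. 1) \<and> Ew P A g / Ew P A (\<lambda>_. 1) \<le> hi"
proof -
  have a: "Ew P A (\<lambda>x. lo * 1) \<le> Ew P A g"
    by (rule Ew_mono) (simp add: assms(3))
  have b: "Ew P A g \<le> Ew P A (\<lambda>x. hi * 1)"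
    by (rule Ew_mono) (simp add: assms(3))
  have c: "lo * Ew P A (\<lambda>_. 1) \<le> Ew P A g"
    using a unfolding Ew_cmult .
  have d: "Ew P A g \<le> hi * Ew P A (\<lambda>_. 1)"
    using b unfolding Ew_cmult .
  show ?thesis
  proof
    show "lo \<le> Ew P A g / Ew P A (\<lambda>_. 1)" using assms(2) c by (subst pos_le_divide_eq) auto
    show "Ew P A g / Ew P A (\<lambda>_. 1) \<le> hi" using assms(2) d by (subst pos_divide_le_eq) auto
  qed
qed

definition SU :: "nat set \<Rightarrow> (nat \<Rightarrow> bool) \<Rightarrow> real" where
  "SU U x = (\<Sum>j\<in>U. if x j then 1 else 0)"

definition agree :: "nat set \<Rightarrow> (nat \<Rightarrow> bool) \<Rightarrow> (nat \<Rightarrow> bool) set" where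
  "agree K r = {x. \<forall>j\<in>K. x j = r j}"

definition goodi :: "nat \<Rightarrow> (nat \<Rightarrow> bool) pmf \<Rightarrow> nat set \<Rightarrow> (nat \<Rightarrow> bool) \<Rightarrow> nat \<Rightarrow> bool" where
  "goodi n P K r i \<longleftrightarrow>
     Ew P (agree K r \<inter> {x. x i}) (\<lambda>_. 1) * Ew P (agree K r \<inter> {x. \<not> x i}) (SU ({..<n} - K))
     \<le> Ew P (agree K r \<inter> {x. \<not> x i}) (\<lambda>_. 1) * Ew P (agree K r \<inter> {x. x i}) (SU ({..<n} - K))"

lemma Ew_ind: assumes "finite (set_pmf P)"
  shows "Ew P (A \<inter> {x. x i}) g = Ew P A (\<lambda>x. (if x i then 1 else 0) * g x)"
proof -
  have eq: "set_pmf P \<inter> (A \<inter> {x. x i}) = {x \<in> set_pmf P \<inter> A. x i}" by blast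
  have "Ew P (A \<inter> {x. x i}) g = (\<Sum>x\<in>set_pmf P \<inter> A. if x i then pmf P x * g x else 0)"
    unfolding Ew_def eq by (rule sum.inter_filter) (use assms in simp)
  also have "\<dots> = Ew P A (\<lambda>x. (if x i then 1 else 0) * g x)"
    unfolding Ew_def by (rule sum.cong) auto
  finally show ?thesis .
qed

lemma Ew_split_i: assumes "finite (set_pmf P)"
  shows "Ew P A g = Ew P (A \<inter> {x. x i}) g + Ew P (A \<inter> {x. \<not> x i}) g"
proof -
  have "A - {x. x i} = A \<inter> {x. \<not> x i}" by blast
  then show ?thesis using Ew_split[OF assms, of A g "{x. x i}"] by simp
qed

lemma var_nonneg: assumes "finite (set_pmf P)"
  shows "Ew P A g * Ew P A g \<le> Ew P A (\<lambda>_. 1) * Ew P A (\<lambda>x. g x * g x)"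
proof -
  let ?D = "set_pmf P \<inter> A"
  have "(\<Sum>x\<in>?D. sqrt (pmf P x) * (sqrt (pmf P x) * g x))\<^sup>2
     \<le> (\<Sum>x\<in>?D. (sqrt (pmf P x))\<^sup>2) * (\<Sum>x\<in>?D. (sqrt (pmf P x) * g x)\<^sup>2)"
    by (rule Cauchy_Schwarz_ineq_sum)
  moreover have "(\<Sum>x\<in>?D. sqrt (pmf P x) * (sqrt (pmf P x) * g x)) = (\<Sum>x\<in>?D. pmf P x * g x)"
    by (rule sum.cong) (simp_all add: mult.assoc[symmetric])
  moreover have "(\<Sum>x\<in>?D. (sqrt (pmf P x))\<^sup>2) = (\<Sum>x\<in>?D. pmf P x * 1)" by simp
  moreover have "(\<Sum>x\<in>?D. (sqrt (pmf P x) * g x)\<^sup>2) = (\<Sum>x\<in>?D. pmf P x * (g x * g x))"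
    by (rule sum.cong) (simp_all add: power_mult_distrib power2_eq_square)
  ultimately have "(\<Sum>x\<in>?D. pmf P x * g x)\<^sup>2 \<le> (\<Sum>x\<in>?D. pmf P x * 1) * (\<Sum>x\<in>?D. pmf P x * (g x * g x))"
    by simp
  then show ?thesis unfolding Ew_def power2_eq_square .
qed

lemma good_exists:
  assumes fin: "finite (set_pmf P)" and ex: "\<exists>i<n. i \<notin> K"
  shows "\<exists>i. i < n \<and> i \<notin> K \<and> goodi n P K r i"
proof (rule ccontr)
  assume nex: "\<not> ?thesis"
  define A where "A = agree K r"
  define U where "U = {..<n} - K"
  define S where "S = SU U"
  define pT where "pT i = Ew P (A \<inter> {x. x i}) (\<lambda>_. 1)" for i
  define eT where "eT i = Ew P (A \<inter> {x. x i}) S" for i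
  define tm where "tm i = Ew P A (\<lambda>_. 1) * eT i - pT i * Ew P A S" for i
  have U: "finite U" "U \<noteq> {}" using ex unfolding U_def by auto
  have tm_neg: "tm i < 0" if "i \<in> U" for i
  proof -
    have ng: "\<not> goodi n P K r i" using nex that unfolding U_def by auto
    have "Ew P A (\<lambda>_. 1) = pT i + Ew P (A \<inter> {x. \<not> x i}) (\<lambda>_. 1)"
      "Ew P A S = eT i + Ew P (A \<inter> {x. \<not> x i}) S"
      unfolding pT_def eT_def by (rule Ew_split_i[OF fin])+
    then show ?thesis using ng unfolding tm_def goodi_def A_def[symmetric] U_def[symmetric] S_def[symmetric]
      pT_def[symmetric] eT_def[symmetric] by (simp add: algebra_simps)
  qed
  have "(\<Sum>i\<in>U. tm i) < (\<Sum>i\<in>U. 0)"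
    by (rule sum_strict_mono) (use U tm_neg in auto)
  moreover have "(\<Sum>i\<in>U. tm i) = Ew P A (\<lambda>_. 1) * Ew P A (\<lambda>x. S x * S x) - Ew P A S * Ew P A S"
  proof -
    have e1: "(\<Sum>i\<in>U. eT i) = Ew P A (\<lambda>x. S x * S x)"
    proof -
      have "(\<Sum>i\<in>U. eT i) = (\<Sum>i\<in>U. \<Sum>x\<in>set_pmf P \<inter> A. pmf P x * ((if x i then 1 else 0) * S x))"
        unfolding eT_def Ew_ind[OF fin] by (simp add: Ew_def)
      also have "\<dots> = (\<Sum>x\<in>set_pmf P \<inter> A. \<Sum>i\<in>U. pmf P x * ((if x i then 1 else 0) * S x))"
        by (rule sum.swap)
      also have "\<dots> = (\<Sum>x\<in>set_pmf P \<inter> A. pmf P x * (S x * S x))"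
      proof (rule sum.cong)
        fix x
        have "(\<Sum>i\<in>U. pmf P x * ((if x i then 1 else 0) * S x)) = pmf P x * S x * (\<Sum>i\<in>U. (if x i then 1 else 0))"
          by (simp add: sum_distrib_left mult_ac)
        then show "(\<Sum>i\<in>U. pmf P x * ((if x i then 1 else 0) * S x)) = pmf P x * (S x * S x)"
          by (simp add: S_def SU_def mult_ac)
      qed simp
      finally show ?thesis unfolding Ew_def .
    qed
    have e2: "(\<Sum>i\<in>U. pT i) = Ew P A S"
    proof -
      have "(\<Sum>i\<in>U. pT i) = (\<Sum>i\<in>U. \<Sum>x\<in>set_pmf P \<inter> A. pmf P x * ((if x i then 1 else 0) * 1))"
        unfolding pT_def Ew_ind[OF fin] by (simp add: Ew_def)
      also have "\<dots> = (\<Sum>x\<in>set_pmf P \<inter> A. \<Sum>i\<in>U. pmf P x * ((if x i then 1 else 0) * 1))"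
        by (rule sum.swap)
      also have "\<dots> = (\<Sum>x\<in>set_pmf P \<inter> A. pmf P x * S x)"
        by (rule sum.cong) (auto simp: S_def SU_def sum_distrib_left)
      finally show ?thesis unfolding Ew_def .
    qed
    show ?thesis unfolding tm_def sum_subtractf sum_distrib_left[symmetric] sum_distrib_right[symmetric] e1 e2
      by simp
  qed
  moreover have "Ew P A S * Ew P A S \<le> Ew P A (\<lambda>_. 1) * Ew P A (\<lambda>x. S x * S x)"
    by (rule var_nonneg[OF fin])
  ultimately show False by simp
qed

definition nxt :: "nat \<Rightarrow> (nat \<Rightarrow> bool) pmf \<Rightarrow> nat set \<Rightarrow> (nat \<Rightarrow> bool) \<Rightarrow> nat" where
  "nxt n P K r = (SOME i. i < n \<and> i \<notin> K \<and> goodi n P K r i)"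

fun sq :: "nat \<Rightarrow> (nat \<Rightarrow> bool) pmf \<Rightarrow> nat \<Rightarrow> (nat \<Rightarrow> bool) \<Rightarrow> nat list" where
  "sq n P 0 x = []"
| "sq n P (Suc k) x = sq n P k x @ [nxt n P (set (sq n P k x)) x]"

definition piF :: "nat \<Rightarrow> (nat \<Rightarrow> bool) pmf \<Rightarrow> (nat \<Rightarrow> bool) \<Rightarrow> nat \<Rightarrow> nat" where
  "piF n P x j = sq n P (Suc j) x ! j"

lemma nxt_agree: assumes "\<forall>j\<in>K. r' j = r j" shows "nxt n P K r' = nxt n P K r"
proof -
  have "agree K r' = agree K r" using assms unfolding agree_def by auto
  then show ?thesis unfolding nxt_def goodi_def by simp
qed

lemma nxt_prop: assumes "finite (set_pmf P)" "\<exists>i<n. i \<notin> K"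
  shows "nxt n P K r < n \<and> nxt n P K r \<notin> K \<and> goodi n P K r (nxt n P K r)"
  unfolding nxt_def by (rule someI_ex[OF good_exists[OF assms]])

lemma length_sq[simp]: "length (sq n P k x) = k"
  by (induction k) auto

lemma sq_nth: "j < k \<Longrightarrow> sq n P k x ! j = piF n P x j"
proof (induction k)
  case 0 then show ?case by simp
next
  case (Suc k)
  show ?case
  proof (cases "j < k")
    case True then show ?thesis using Suc by (simp add: nth_append)
  next
    case False then have "j = k" using Suc by simp
    then show ?thesis unfolding piF_def by simp
  qed
qed

lemma set_sq: "set (sq n P k x) = piF n P x ` {..<k}"
  apply (auto simp: set_conv_nth sq_nth)
  by (metis sq_nth)

lemma sq_agree: "(\<forall>j\<in>set (sq n P k x). y j = x j) \<Longrightarrow> sq n P k y = sq n P k x"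
proof (induction k)
  case 0 then show ?case by simp
next
  case (Suc k)
  then have ih: "sq n P k y = sq n P k x" by simp
  have "\<forall>j\<in>set (sq n P k x). y j = x j" using Suc.prems by simp
  then have "nxt n P (set (sq n P k x)) y = nxt n P (set (sq n P k x)) x" by (rule nxt_agree)
  then show ?case using ih by simp
qed

lemma free_exists: assumes "distinct (sq n P k x)" "set (sq n P k x) \<subseteq> {..<n}" "k < n"
  shows "\<exists>i<n. i \<notin> set (sq n P k x)"
proof (rule ccontr)
  assume "\<not> ?thesis"
  then have "{..<n} \<subseteq> set (sq n P k x)" by auto
  then have "card {..<n} \<le> card (set (sq n P k x))" by (rule card_mono[rotated]) simp
  then show False using assms by (simp add: distinct_card)
qed

lemma sq_valid: assumes "finite (set_pmf P)"
  shows "k \<le> n \<Longrightarrow> distinct (sq n P k x) \<and> set (sq n P k x) \<subseteq> {..<n}"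
proof (induction k)
  case 0 then show ?case by simp
next
  case (Suc k)
  then have ih: "distinct (sq n P k x)" "set (sq n P k x) \<subseteq> {..<n}" by auto
  have "\<exists>i<n. i \<notin> set (sq n P k x)" using free_exists[OF ih] Suc.prems by simp
  from nxt_prop[OF assms this, of x] show ?case using ih by auto
qed

lemma piF_bij: assumes "finite (set_pmf P)" shows "bij_betw (piF n P x) {..<n} {..<n}"
proof -
  have v: "distinct (sq n P n x)" "set (sq n P n x) \<subseteq> {..<n}" using sq_valid[OF assms, of n n x] by auto
  have "card (set (sq n P n x)) = card {..<n}" using v by (simp add: distinct_card)
  then have im: "piF n P x ` {..<n} = {..<n}" using v card_subset_eq[of "{..<n}" "set (sq n P n x)"]
    by (simp add: set_sq)
  have "inj_on (piF n P x) {..<n}"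
  proof
    fix a b assume "a \<in> {..<n}" "b \<in> {..<n}" "piF n P x a = piF n P x b"
    then have "sq n P n x ! a = sq n P n x ! b" "a < n" "b < n"
      using sq_nth[of a n n P x] sq_nth[of b n n P x] by auto
    then show "a = b" using v(1) nth_eq_iff_index_eq[of "sq n P n x" a b] by simp
  qed
  then show ?thesis using im unfolding bij_betw_def by simp
qed

lemma hist_eq: "hist (piF n P) k x = agree (set (sq n P k x)) x"
proof
  show "hist (piF n P) k x \<subseteq> agree (set (sq n P k x)) x"
    unfolding hist_def agree_def set_sq by auto
  show "agree (set (sq n P k x)) x \<subseteq> hist (piF n P) k x"
  proof
    fix y assume "y \<in> agree (set (sq n P k x)) x"
    then have a: "\<forall>j\<in>set (sq n P k x). y j = x j" unfolding agree_def by auto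
    then have "sq n P k y = sq n P k x" by (rule sq_agree)
    then show "y \<in> hist (piF n P) k x" using a unfolding hist_def set_sq[symmetric] by auto
  qed
qed

lemma step_eq: assumes "y \<in> agree (set (sq n P k x)) x"
  shows "agree (set (sq n P (Suc k) y)) y
     = agree (set (sq n P k x)) x \<inter> {z. z (nxt n P (set (sq n P k x)) x) = y (nxt n P (set (sq n P k x)) x)}"
proof -
  have a: "\<forall>j\<in>set (sq n P k x). y j = x j" using assms unfolding agree_def by auto
  then have e: "sq n P k y = sq n P k x" by (rule sq_agree)
  have "nxt n P (set (sq n P k x)) y = nxt n P (set (sq n P k x)) x" using a by (rule nxt_agree)
  then show ?thesis using e a unfolding agree_def by auto
qed

lemma Ew_avg: assumes "finite (set_pmf P)" shows "Ew P A (\<lambda>_. Ew P A g / Ew P A (\<lambda>_. 1)) = Ew P A g"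
proof (cases "Ew P A (\<lambda>_. 1) = 0")
  case True then show ?thesis using Ew_zero[OF assms True] by (simp add: Ew_def)
next
  case False
  have "Ew P A (\<lambda>_. Ew P A g / Ew P A (\<lambda>_. 1) * 1) = Ew P A g / Ew P A (\<lambda>_. 1) * Ew P A (\<lambda>_. 1)"
    by (rule Ew_cmult)
  then show ?thesis using False by simp
qed

lemma martingale: assumes fin: "finite (set_pmf P)"
  shows "cexp P (hist (piF n P) k x) (Ymart P f (piF n P) (Suc k)) = Ymart P f (piF n P) k x"
proof -
  define H where "H = agree (set (sq n P k x)) x"
  define i where "i = nxt n P (set (sq n P k x)) x"
  let ?Y = "Ymart P f (piF n P) (Suc k)"
  have Yv: "?Y y = cexp P (H \<inter> {z. z i = y i}) f" if "y \<in> H" for y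
    unfolding Ymart_def hist_eq using step_eq[of y n P k x] that unfolding H_def i_def by simp
  have "Ew P (H \<inter> {z. z i}) ?Y = Ew P (H \<inter> {z. z i}) (\<lambda>_. Ew P (H \<inter> {z. z i}) f / Ew P (H \<inter> {z. z i}) (\<lambda>_. 1))"
    by (rule Ew_cong) (simp add: Yv cexp_Ew[OF fin])
  also have "\<dots> = Ew P (H \<inter> {z. z i}) f" by (rule Ew_avg[OF fin])
  finally have 1: "Ew P (H \<inter> {z. z i}) ?Y = Ew P (H \<inter> {z. z i}) f" .
  have "Ew P (H \<inter> {z. \<not> z i}) ?Y = Ew P (H \<inter> {z. \<not> z i}) (\<lambda>_. Ew P (H \<inter> {z. \<not> z i}) f / Ew P (H \<inter> {z. \<not> z i}) (\<lambda>_. 1))"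
    by (rule Ew_cong) (simp add: Yv cexp_Ew[OF fin])
  also have "\<dots> = Ew P (H \<inter> {z. \<not> z i}) f" by (rule Ew_avg[OF fin])
  finally have 2: "Ew P (H \<inter> {z. \<not> z i}) ?Y = Ew P (H \<inter> {z. \<not> z i}) f" .
  have "Ew P H ?Y = Ew P H f" using 1 2 Ew_split_i[OF fin, of H _ i] by simp
  then show ?thesis unfolding hist_eq H_def[symmetric] cexp_Ew[OF fin] Ymart_def by simp
qed

lemma cube_upd: "x \<in> cube n \<Longrightarrow> i < n \<Longrightarrow> x(i := b) \<in> cube n"
  unfolding cube_def by auto

lemma lip_ham:
  assumes lip: "lipschitz1 n f" and v: "v \<in> cube n"
  shows "u \<in> cube n \<Longrightarrow> f u - f v \<le> card {j. j < n \<and> u j \<noteq> v j}"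
proof (induction "card {j. j < n \<and> u j \<noteq> v j}" arbitrary: u)
  case 0
  have "finite {j. j < n \<and> u j \<noteq> v j}" by simp
  then have "{j. j < n \<and> u j \<noteq> v j} = {}" using 0 by simp
  then have "u = v"
  proof (intro ext)
    fix j show "u j = v j"
      using \<open>{j. j < n \<and> u j \<noteq> v j} = {}\<close> 0(2) v unfolding cube_def by (cases "j < n") auto
  qed
  then show ?case by simp
next
  case (Suc m)
  then obtain j where j: "j < n" "u j \<noteq> v j"
    by (metis (mono_tags, lifting) card.empty empty_Collect_eq nat.distinct(1))
  define u' where "u' = u(j := v j)"
  have u'c: "u' \<in> cube n" unfolding u'_def by (rule cube_upd[OF Suc(3) j(1)])
  have "{k. k < n \<and> u' k \<noteq> v k} = {k. k < n \<and> u k \<noteq> v k} - {j}"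
    unfolding u'_def by auto
  then have cm: "m = card {k. k < n \<and> u' k \<noteq> v k}" using Suc(2) j by simp
  have "f u' - f v \<le> m" using Suc(1)[OF cm u'c] cm by simp
  moreover have "\<bar>f u - f (u(j := \<not> u j))\<bar> \<le> 1" using lip Suc(3) j(1) unfolding lipschitz1_def by blast
  moreover have "u(j := \<not> u j) = u'" unfolding u'_def using j by auto
  ultimately show ?case using Suc(2) by simp
qed

lemma nr_app:
  assumes fin: "finite (set_pmf P)" and nr: "negative_regression n P"
    and K: "K \<subseteq> {..<n}" and i: "i < n" "i \<notin> K"
    and pT: "Ew P (agree K r \<inter> {x. x i}) (\<lambda>_. 1) > 0"
    and pF: "Ew P (agree K r \<inter> {x. \<not> x i}) (\<lambda>_. 1) > 0"
    and mono: "\<forall>x y. (\<forall>j\<in>{..<n} - K - {i}. x j \<le> y j) \<longrightarrow> G x \<le> G y"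
  shows "Ew P (agree K r \<inter> {x. x i}) G / Ew P (agree K r \<inter> {x. x i}) (\<lambda>_. 1)
       \<le> Ew P (agree K r \<inter> {x. \<not> x i}) G / Ew P (agree K r \<inter> {x. \<not> x i}) (\<lambda>_. 1)"
proof -
  have eF: "{x. \<forall>j\<in>insert i K. x j = (r(i := False)) j} = agree K r \<inter> {x. \<not> x i}"
    using i unfolding agree_def by auto
  have eT: "{x. \<forall>j\<in>insert i K. x j = (r(i := True)) j} = agree K r \<inter> {x. x i}"
    using i unfolding agree_def by auto
  have ab: "\<forall>j\<in>insert i K. (r(i := False)) j \<le> (r(i := True)) j" by auto
  have "measure_pmf.prob P {x. \<forall>j\<in>insert i K. x j = (r(i := False)) j} > 0 \<longrightarrow>
        measure_pmf.prob P {x. \<forall>j\<in>insert i K. x j = (r(i := True)) j} > 0 \<longrightarrow>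
        cexp P {x. \<forall>j\<in>insert i K. x j = (r(i := False)) j} G \<ge> cexp P {x. \<forall>j\<in>insert i K. x j = (r(i := True)) j} G"
    using nr unfolding negative_regression_def
    apply -
    apply (drule spec[of _ "{..<n} - K - {i}"], drule spec[of _ "insert i K"])
    apply (drule mp, blast, drule mp, use K i in blast, drule mp, blast)
    apply (drule spec[of _ G], drule mp, rule mono)
    apply (drule spec[of _ "r(i := False)"], drule spec[of _ "r(i := True)"])
    apply (drule mp, rule ab)
    by assumption
  then have "cexp P (agree K r \<inter> {x. \<not> x i}) G \<ge> cexp P (agree K r \<inter> {x. x i}) G"
    unfolding eF eT prob_Ew[OF fin] using pT pF by blast
  then show ?thesis unfolding cexp_Ew[OF fin] .
qed

lemma arith1:
  fixes pT pF ET EF :: real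
  assumes "pT > 0" "pF > 0" "pT * EF \<le> pF * (ET + pT)"
  shows "EF / pF - ET / pT \<le> 1"
proof -
  have "EF / pF - ET / pT = (EF * pT - ET * pF) / (pF * pT)"
    using assms by (simp add: diff_frac_eq)
  also have "\<dots> \<le> 1" using assms
    by (subst pos_divide_le_eq) (simp, simp add: algebra_simps)
  finally show ?thesis .
qed

lemma sum_if_card: "finite I \<Longrightarrow> (\<Sum>j\<in>I. if Q j then 1 else 0 :: real) = real (card {j\<in>I. Q j})"
  by (simp add: sum.inter_filter[symmetric])

lemma key:
  assumes fin: "finite (set_pmf P)" and supp: "set_pmf P \<subseteq> cube n"
    and nr: "negative_regression n P" and lip: "lipschitz1 n f"
    and K: "K \<subseteq> {..<n}" and i: "i < n" "i \<notin> K" and good: "goodi n P K r i"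
    and pT: "Ew P (agree K r \<inter> {x. x i}) (\<lambda>_. 1) > 0"
    and pF: "Ew P (agree K r \<inter> {x. \<not> x i}) (\<lambda>_. 1) > 0"
  shows "\<bar>Ew P (agree K r \<inter> {x. x i}) f / Ew P (agree K r \<inter> {x. x i}) (\<lambda>_. 1)
        - Ew P (agree K r \<inter> {x. \<not> x i}) f / Ew P (agree K r \<inter> {x. \<not> x i}) (\<lambda>_. 1)\<bar>
        \<le> (if monotone_cube n f then 1 else 2)"
proof -
  define HT where "HT = agree K r \<inter> {x. x i}"
  define HF where "HF = agree K r \<inter> {x. \<not> x i}"
  define C where "C A G = Ew P A G / Ew P A (\<lambda>_. 1)" for A G
  define I where "I = {..<n} - K - {i}"
  define proj where "proj x = (\<lambda>j. if j \<in> I then x j else if j \<in> K then r j else False)" for x :: "nat \<Rightarrow> bool"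
  define g where "g x = f (proj x)" for x
  define SI where "SI = SU I"
  have Cadd: "C A (\<lambda>x. G x + H x) = C A G + C A H" for A G H
    unfolding C_def Ew_add by (simp add: add_divide_distrib)
  have Cdiff: "C A (\<lambda>x. G x - H x) = C A G - C A H" for A G H
    unfolding C_def Ew_diff by (simp add: diff_divide_distrib)
  have Ccong: "C A G = C A H" if "\<And>x. x \<in> set_pmf P \<Longrightarrow> x \<in> A \<Longrightarrow> G x = H x" for A G H
    unfolding C_def using Ew_cong[of P A G H] that by simp
  have I: "I \<subseteq> {..<n}" "finite I" "i \<notin> I" "I \<inter> K = {}" unfolding I_def by auto
  have incube: "x \<in> cube n" if "x \<in> set_pmf P" for x using supp that by auto
  have F1: "proj x = x" if "x \<in> set_pmf P" "x \<in> HF" for x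
  proof
    fix j show "proj x j = x j"
      using incube[OF that(1)] that(2) i K unfolding proj_def HF_def agree_def cube_def I_def
      by (cases "j < n") auto
  qed
  have F2: "proj x = x(i := False)" if "x \<in> set_pmf P" "x \<in> HT" for x
  proof
    fix j show "proj x j = (x(i := False)) j"
      using incube[OF that(1)] that(2) i K unfolding proj_def HT_def agree_def cube_def I_def
      by (cases "j < n") auto
  qed
  have F3: "proj x \<in> cube n" for x
    using I(1) K unfolding proj_def cube_def by auto
  have ham: "{j. j < n \<and> proj u j \<noteq> proj v j} = {j\<in>I. u j \<noteq> v j}" for u v
    using I(1) unfolding proj_def by auto
  have SIdiff: "SI y - SI x = real (card {j\<in>I. x j \<noteq> y j})" if "\<forall>j\<in>I. x j \<le> y j" for x y
  proof -
    have "SI y - SI x = (\<Sum>j\<in>I. if x j \<noteq> y j then 1 else 0)"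
      unfolding SI_def SU_def sum_subtractf[symmetric]
      by (rule sum.cong) (use that in auto)
    then show ?thesis using sum_if_card[OF I(2)] by simp
  qed
  have h1: "g x + SI x \<le> g y + SI y" if "\<forall>j\<in>I. x j \<le> y j" for x y
    using lip_ham[OF lip F3 F3, of x y] SIdiff[OF that] unfolding g_def ham
    by (simp add: eq_commute[of "x _" "y _"] ) 
  have h2: "SI x - g x \<le> SI y - g y" if "\<forall>j\<in>I. x j \<le> y j" for x y
  proof -
    have a: "f (proj y) - f (proj x) \<le> real (card {j\<in>I. y j \<noteq> x j})"
      using lip_ham[OF lip F3 F3, of y x] unfolding ham .
    have b: "card {j\<in>I. y j \<noteq> x j} = card {j\<in>I. x j \<noteq> y j}" by (rule arg_cong[where f=card]) auto
    show ?thesis using a b SIdiff[OF that] unfolding g_def by linarith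
  qed
  have N1: "C HT (\<lambda>x. g x + SI x) \<le> C HF (\<lambda>x. g x + SI x)"
    unfolding C_def HT_def HF_def
    by (rule nr_app[OF fin nr K i pT pF]) (use h1 in \<open>auto simp: I_def\<close>)
  have N2: "C HT (\<lambda>x. SI x - g x) \<le> C HF (\<lambda>x. SI x - g x)"
    unfolding C_def HT_def HF_def
    by (rule nr_app[OF fin nr K i pT pF]) (use h2 in \<open>auto simp: I_def\<close>)
  have pT': "Ew P HT (\<lambda>_. 1) > 0" and pF': "Ew P HF (\<lambda>_. 1) > 0" using pT pF HT_def HF_def by auto
  have SUsplit: "SU ({..<n} - K) x = SI x + (if x i then 1 else 0)" for x
  proof -
    have "{..<n} - K = insert i I" using i unfolding I_def by auto
    then show ?thesis unfolding SI_def SU_def using I(2,3) by simp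
  qed
  have EF: "Ew P HF (SU ({..<n} - K)) = Ew P HF SI"
    by (rule Ew_cong) (simp add: SUsplit HF_def)
  have ET: "Ew P HT (SU ({..<n} - K)) = Ew P HT SI + Ew P HT (\<lambda>_. 1)"
    unfolding Ew_add[symmetric] by (rule Ew_cong) (simp add: SUsplit HT_def)
  have "Ew P HT (\<lambda>_. 1) * Ew P HF SI \<le> Ew P HF (\<lambda>_. 1) * (Ew P HT SI + Ew P HT (\<lambda>_. 1))"
    using good unfolding goodi_def HT_def[symmetric] HF_def[symmetric] EF ET .
  then have Delta: "C HF SI - C HT SI \<le> 1" unfolding C_def by (rule arith1[OF pT' pF'])
  have gb: "\<bar>C HT g - C HF g\<bar> \<le> 1" using N1 N2 Delta unfolding Cadd Cdiff by linarith
  have cT: "C HT f = C HT (\<lambda>x. f (x(i := True)))"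
    by (rule Ccong) (simp add: HT_def fun_upd_idem)
  have cTg: "C HT g = C HT (\<lambda>x. f (x(i := False)))"
    by (rule Ccong) (simp add: F2 g_def)
  have cF: "C HF f = C HF g"
    by (rule Ccong) (simp add: F1 g_def)
  have d1: "\<bar>f (x(i := True)) - f (x(i := False))\<bar> \<le> 1" if "x \<in> set_pmf P" for x
  proof -
    have "x(i := False) \<in> cube n" by (rule cube_upd[OF incube[OF that] i(1)])
    then have "\<bar>f (x(i := False)) - f ((x(i := False))(i := \<not> (x(i := False)) i))\<bar> \<le> 1"
      using lip i unfolding lipschitz1_def by blast
    then show ?thesis by simp
  qed
  have D1: "-1 \<le> C HT (\<lambda>x. f (x(i := True)) - f (x(i := False))) \<and> C HT (\<lambda>x. f (x(i := True)) - f (x(i := False))) \<le> 1"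
    unfolding C_def by (rule cexp_bounds[OF fin pT']) (use d1 in force)
  have diff: "C HT f - C HF f = C HT (\<lambda>x. f (x(i := True)) - f (x(i := False))) + (C HT g - C HF g)"
    unfolding cT cTg cF Cdiff by simp
  show ?thesis
  proof (cases "monotone_cube n f")
    case False
    then have e: "(if monotone_cube n f then 1 else 2) = (2::real)" by simp
    show ?thesis unfolding e abs_le_iff using diff D1 gb unfolding C_def HT_def HF_def abs_le_iff by linarith
  next
    case True
    have gm: "C HT g \<le> C HF g"
      unfolding C_def HT_def HF_def
    proof (rule nr_app[OF fin nr K i pT pF], intro allI impI)
      fix x y :: "nat \<Rightarrow> bool" assume "\<forall>j\<in>{..<n} - K - {i}. x j \<le> y j"
      then have "\<forall>j<n. proj x j \<le> proj y j" unfolding proj_def I_def by auto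
      then show "g x \<le> g y" using True F3 unfolding monotone_cube_def g_def by blast
    qed
    have d1m: "0 \<le> f (x(i := True)) - f (x(i := False))" if "x \<in> set_pmf P" for x
    proof -
      have "x(i := False) \<in> cube n" "x(i := True) \<in> cube n" by (rule cube_upd[OF incube[OF that] i(1)])+
      moreover have "\<forall>j<n. (x(i := False)) j \<le> (x(i := True)) j" by auto
      ultimately show ?thesis using True unfolding monotone_cube_def by auto
    qed
    have D1m: "0 \<le> C HT (\<lambda>x. f (x(i := True)) - f (x(i := False)))"
      unfolding C_def using cexp_bounds[OF fin pT', of 0 "\<lambda>x. f (x(i := True)) - f (x(i := False))" 1] d1 d1m
      by force
    have e: "(if monotone_cube n f then 1 else 2) = (1::real)" using True by simp
    show ?thesis unfolding e abs_le_iff using diff D1 D1m gb gm unfolding C_def HT_def HF_def abs_le_iff by linarith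
  qed
qed

lemma piF_nxt: "piF n P z k = nxt n P (set (sq n P k z)) z"
  unfolding piF_def by (simp add: nth_append)

lemma cexp_T: "cexp P (H \<inter> {z. z i = True}) f = cexp P (H \<inter> {z. z i}) f" by simp
lemma cexp_F: "cexp P (H \<inter> {z. z i = False}) f = cexp P (H \<inter> {z. \<not> z i}) f" by simp

theorem mainTheorem4:
  fixes n :: nat and P :: "(nat \<Rightarrow> bool) pmf" and f :: "(nat \<Rightarrow> bool) \<Rightarrow> real"
  assumes "set_pmf P \<subseteq> cube n"
    and "negative_regression n P"
    and "lipschitz1 n f"
  shows "\<exists>\<pi> :: (nat \<Rightarrow> bool) \<Rightarrow> nat \<Rightarrow> nat.
     (\<forall>x\<in>set_pmf P. bij_betw (\<pi> x) {..<n} {..<n}) \<and>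
     (\<forall>x\<in>set_pmf P. \<forall>y\<in>set_pmf P. \<pi> x 0 = \<pi> y 0) \<and>
     (\<forall>k. 1 \<le> k \<and> k < n \<longrightarrow> (\<forall>x\<in>set_pmf P. \<forall>y\<in>set_pmf P.
         \<pi> x ` {..<k} = \<pi> y ` {..<k} \<and> (\<forall>i\<in>\<pi> x ` {..<k}. x i = y i) \<longrightarrow> \<pi> x k = \<pi> y k)) \<and>
     (\<forall>k<n. \<forall>x\<in>set_pmf P.
         cexp P (hist \<pi> k x) (Ymart P f \<pi> (Suc k)) = Ymart P f \<pi> k x) \<and>
     (\<forall>k<n. \<forall>K a. measure_pmf.prob P {y. \<pi> y ` {..<k} = K \<and> (\<forall>i\<in>K. y i = a i)} > 0 \<longrightarrow>
         (\<exists>\<alpha> \<beta>. \<alpha> < \<beta> \<and> \<beta> - \<alpha> \<le> (if monotone_cube n f then 1 else 2) \<and>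
            (\<forall>y\<in>set_pmf P. \<pi> y ` {..<k} = K \<and> (\<forall>i\<in>K. y i = a i) \<longrightarrow>
               Ymart P f \<pi> (Suc k) y - Ymart P f \<pi> k y \<in> {\<alpha>..\<beta>})))"
proof -
  have fin: "finite (set_pmf P)" using assms(1) finite_cube by (rule finite_subset)
  define \<pi> where "\<pi> = piF n P"
  have P1: "\<forall>x\<in>set_pmf P. bij_betw (\<pi> x) {..<n} {..<n}" unfolding \<pi>_def using piF_bij[OF fin] by blast
  have P2: "\<forall>x\<in>set_pmf P. \<forall>y\<in>set_pmf P. \<pi> x 0 = \<pi> y 0"
    unfolding \<pi>_def piF_nxt using nxt_agree[of "{}"] by simp
  have P3: "\<forall>k. 1 \<le> k \<and> k < n \<longrightarrow> (\<forall>x\<in>set_pmf P. \<forall>y\<in>set_pmf P.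
         \<pi> x ` {..<k} = \<pi> y ` {..<k} \<and> (\<forall>i\<in>\<pi> x ` {..<k}. x i = y i) \<longrightarrow> \<pi> x k = \<pi> y k)"
  proof (intro allI impI ballI)
    fix k x y assume h: "\<pi> x ` {..<k} = \<pi> y ` {..<k} \<and> (\<forall>i\<in>\<pi> x ` {..<k}. x i = y i)"
    then have a0: "\<forall>j\<in>piF n P x ` {..<k}. y j = x j" unfolding \<pi>_def by blast
    then have a: "\<forall>j\<in>set (sq n P k x). y j = x j" unfolding set_sq .
    then have "sq n P k y = sq n P k x" by (rule sq_agree)
    moreover have "nxt n P (set (sq n P k x)) y = nxt n P (set (sq n P k x)) x" using a by (rule nxt_agree)
    ultimately show "\<pi> x k = \<pi> y k" unfolding \<pi>_def piF_nxt by simp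
  qed
  have P4: "\<forall>k<n. \<forall>x\<in>set_pmf P. cexp P (hist \<pi> k x) (Ymart P f \<pi> (Suc k)) = Ymart P f \<pi> k x"
    unfolding \<pi>_def using martingale[OF fin] by blast
  have P5: "\<forall>k<n. \<forall>K a. measure_pmf.prob P {y. \<pi> y ` {..<k} = K \<and> (\<forall>i\<in>K. y i = a i)} > 0 \<longrightarrow>
         (\<exists>\<alpha> \<beta>. \<alpha> < \<beta> \<and> \<beta> - \<alpha> \<le> (if monotone_cube n f then 1 else 2) \<and>
            (\<forall>y\<in>set_pmf P. \<pi> y ` {..<k} = K \<and> (\<forall>i\<in>K. y i = a i) \<longrightarrow>
               Ymart P f \<pi> (Suc k) y - Ymart P f \<pi> k y \<in> {\<alpha>..\<beta>}))"
  proof (intro allI impI)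
    fix k K a assume k: "k < n" and pos: "measure_pmf.prob P {y. \<pi> y ` {..<k} = K \<and> (\<forall>i\<in>K. y i = a i)} > 0"
    define E where "E = {y. \<pi> y ` {..<k} = K \<and> (\<forall>i\<in>K. y i = a i)}"
    define B where "B = (if monotone_cube n f then 1 else 2 :: real)"
    have "set_pmf P \<inter> E \<noteq> {}"
    proof
      assume "set_pmf P \<inter> E = {}"
      then have "Ew P E (\<lambda>_. 1) = 0" unfolding Ew_def by simp
      then show False using pos prob_Ew[OF fin] unfolding E_def by simp
    qed
    then obtain y0 where y0: "y0 \<in> set_pmf P" "y0 \<in> E" by blast
    have Keq: "K = set (sq n P k y0)" using y0(2) unfolding E_def \<pi>_def set_sq by simp
    define H where "H = agree K y0"
    define i where "i = nxt n P K y0"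
    have v: "distinct (sq n P k y0)" "set (sq n P k y0) \<subseteq> {..<n}" using sq_valid[OF fin, of k n y0] k by auto
    have ip: "i < n \<and> i \<notin> K \<and> goodi n P K y0 i"
      unfolding i_def Keq by (rule nxt_prop[OF fin free_exists[OF v k]])
    have KS: "K \<subseteq> {..<n}" using v Keq by simp
    have EH: "y \<in> H" if "y \<in> E" for y
      using that y0(2) unfolding E_def H_def agree_def by auto
    have Yk: "Ymart P f \<pi> k y = cexp P H f" if "y \<in> E" for y
    proof -
      have "\<forall>j\<in>set (sq n P k y0). y j = y0 j" using EH[OF that] unfolding H_def agree_def Keq by auto
      then have "sq n P k y = sq n P k y0" by (rule sq_agree)
      moreover have "agree K y = agree K y0" using EH[OF that] unfolding H_def agree_def by auto
      ultimately show ?thesis unfolding Ymart_def \<pi>_def hist_eq H_def Keq by simp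
    qed
    have YS: "Ymart P f \<pi> (Suc k) y = cexp P (H \<inter> {z. z i = y i}) f" if "y \<in> E" for y
    proof -
      have "y \<in> agree (set (sq n P k y0)) y0" using EH[OF that] unfolding H_def Keq .
      from step_eq[OF this] show ?thesis unfolding Ymart_def \<pi>_def hist_eq H_def i_def Keq by simp
    qed
    define vv where "vv b = cexp P (H \<inter> {z. z i = b}) f - cexp P H f" for b
    have diffeq: "Ymart P f \<pi> (Suc k) y - Ymart P f \<pi> k y = vv (y i)" if "y \<in> E" for y
      using YS[OF that] Yk[OF that] unfolding vv_def by simp
    have close: "\<bar>vv (y i) - vv (z i)\<bar> \<le> B" if "y \<in> set_pmf P \<inter> E" "z \<in> set_pmf P \<inter> E" for y z
    proof (cases "y i = z i")
      case True then show ?thesis unfolding B_def by simp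
    next
      case False
      have pT: "Ew P (agree K y0 \<inter> {x. x i}) (\<lambda>_. 1) > 0"
      proof (cases "y i")
        case True then show ?thesis using that EH by (intro Ew_pos[OF fin, of y]) (auto simp: H_def)
      next
        case F: False then have "z i" using False by simp
        then show ?thesis using that EH by (intro Ew_pos[OF fin, of z]) (auto simp: H_def)
      qed
      have pF: "Ew P (agree K y0 \<inter> {x. \<not> x i}) (\<lambda>_. 1) > 0"
      proof (cases "y i")
        case F: True then have "\<not> z i" using False by simp
        then show ?thesis using that EH by (intro Ew_pos[OF fin, of z]) (auto simp: H_def)
      next
        case False then show ?thesis using that EH by (intro Ew_pos[OF fin, of y]) (auto simp: H_def)
      qed
      have kk: "\<bar>vv True - vv False\<bar> \<le> B"
        using key[OF fin assms(1) assms(2) assms(3) KS _ _ _ pT pF] ip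
        unfolding vv_def B_def cexp_T cexp_F cexp_Ew[OF fin] H_def by simp
      show ?thesis using kk False by (cases "y i") (auto simp: abs_minus_commute)
    qed
    define V where "V = (\<lambda>y. vv (y i)) ` (set_pmf P \<inter> E)"
    have Vf: "finite V" "V \<noteq> {}" unfolding V_def using fin y0 by auto
    obtain z where z: "z \<in> set_pmf P \<inter> E" "Max V = vv (z i)"
      using Max_in[OF Vf] unfolding V_def by auto
    show "\<exists>\<alpha> \<beta>. \<alpha> < \<beta> \<and> \<beta> - \<alpha> \<le> (if monotone_cube n f then 1 else 2) \<and>
            (\<forall>y\<in>set_pmf P. \<pi> y ` {..<k} = K \<and> (\<forall>i\<in>K. y i = a i) \<longrightarrow>
               Ymart P f \<pi> (Suc k) y - Ymart P f \<pi> k y \<in> {\<alpha>..\<beta>})"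
    proof (intro exI conjI ballI impI)
      show "Max V - B < Max V" unfolding B_def by simp
      show "Max V - (Max V - B) \<le> (if monotone_cube n f then 1 else 2)" unfolding B_def by simp
      fix y assume "y \<in> set_pmf P" "\<pi> y ` {..<k} = K \<and> (\<forall>i\<in>K. y i = a i)"
      then have yE: "y \<in> set_pmf P \<inter> E" unfolding E_def by simp
      have "vv (y i) \<le> Max V" using Vf yE unfolding V_def by auto
      moreover have "\<bar>vv (y i) - vv (z i)\<bar> \<le> B" by (rule close[OF yE z(1)])
      ultimately show "Ymart P f \<pi> (Suc k) y - Ymart P f \<pi> k y \<in> {Max V - B..Max V}"
        using diffeq yE z(2) by auto
    qed
  qed
  show ?thesis using P1 P2 P3 P4 P5 by blast
qed

end
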